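(* Let $S$ be a semigroup with tight twisting $\Phi$ and $0$-twisted semigroup $T_\Phi^0$. Then for every $\mathcal{K}\in\{\mathcal{R},\mathcal{L},\mathcal{D},\mathcal{J},\mathcal{H}\}$, as relations on $T_\Phi^0$, $\mathcal{K}^{T_\Phi^0}=\mathcal{K}^{S}\cup\{(0,0)\}$.
   Context: Green's relations are the standard ones; a superscript indicates the semigroup in which they are computed. $\mathbb{N}=\{0,1,2,\dots\}$. A twisting of a semigroup $S$ is a map $\Phi:S\times S\to\mathbb{N}$ with $\Phi(a,b)+\Phi(ab,c)=\Phi(a,bc)+\Phi(b,c)$ for all $a,b,c\in S$. It is tight if (1) for all $a,b\in S$ there is $a'\in S$ with $ab=a'b$ and $\Phi(a',b)=0$, and (2) for all $a,b\in S$ there is $b'\in S$ with $ab=ab'$ and $\Phi(a,b')=0$. For $S=(X,\cdot)$ with twisting $\Phi$, the $0$-twisted semigroup is $T_\Phi^0=(X\sqcup\{0\},* )$ where $a*b=ab$ if $a,b\neq0$ and $\Phi(a,b)=0$, and $a*b=0$ otherwise. *)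

theory Defs
  imports Main
begin

text \<open>Green's relations for a semigroup given by its multiplication m on the whole type.
  Principal ideals are taken in S^1 (adjoin an identity).\<close>

definition princ_right :: "('b \<Rightarrow> 'b \<Rightarrow> 'b) \<Rightarrow> 'b \<Rightarrow> 'b set" where
  "princ_right m a = insert a (range (m a))"

definition princ_left :: "('b \<Rightarrow> 'b \<Rightarrow> 'b) \<Rightarrow> 'b \<Rightarrow> 'b set" where
  "princ_left m a = insert a (range (\<lambda>x. m x a))"

definition princ_two :: "('b \<Rightarrow> 'b \<Rightarrow> 'b) \<Rightarrow> 'b \<Rightarrow> 'b set" where
  "princ_two m a = insert a (range (m a) \<union> range (\<lambda>x. m x a) \<union> {m (m x a) y | x y. True})"

definition greenR :: "('b \<Rightarrow> 'b \<Rightarrow> 'b) \<Rightarrow> ('b \<times> 'b) set" where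
  "greenR m = {(a, b). princ_right m a = princ_right m b}"

definition greenL :: "('b \<Rightarrow> 'b \<Rightarrow> 'b) \<Rightarrow> ('b \<times> 'b) set" where
  "greenL m = {(a, b). princ_left m a = princ_left m b}"

definition greenJ :: "('b \<Rightarrow> 'b \<Rightarrow> 'b) \<Rightarrow> ('b \<times> 'b) set" where
  "greenJ m = {(a, b). princ_two m a = princ_two m b}"

definition greenD :: "('b \<Rightarrow> 'b \<Rightarrow> 'b) \<Rightarrow> ('b \<times> 'b) set" where
  "greenD m = greenR m O greenL m"

definition greenH :: "('b \<Rightarrow> 'b \<Rightarrow> 'b) \<Rightarrow> ('b \<times> 'b) set" where
  "greenH m = greenR m \<inter> greenL m"

definition twisting :: "('a::semigroup_mult \<Rightarrow> 'a \<Rightarrow> nat) \<Rightarrow> bool" where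
  "twisting \<Phi> \<longleftrightarrow> (\<forall>a b c. \<Phi> a b + \<Phi> (a * b) c = \<Phi> a (b * c) + \<Phi> b c)"

definition tight_twisting :: "('a::semigroup_mult \<Rightarrow> 'a \<Rightarrow> nat) \<Rightarrow> bool" where
  "tight_twisting \<Phi> \<longleftrightarrow> twisting \<Phi>
     \<and> (\<forall>a b. \<exists>a'. a * b = a' * b \<and> \<Phi> a' b = 0)
     \<and> (\<forall>a b. \<exists>b'. a * b = a * b' \<and> \<Phi> a b' = 0)"

text \<open>The 0-twisted semigroup on X \<union> {0}, modelled as 'a option with None = 0.\<close>

fun tw0_mult :: "('a::semigroup_mult \<Rightarrow> 'a \<Rightarrow> nat) \<Rightarrow> 'a option \<Rightarrow> 'a option \<Rightarrow> 'a option" where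
  "tw0_mult \<Phi> (Some a) (Some b) = (if \<Phi> a b = 0 then Some (a * b) else None)"
| "tw0_mult \<Phi> _ _ = None"

definition lift_rel :: "('a \<times> 'a) set \<Rightarrow> ('a option \<times> 'a option) set" where
  "lift_rel K = map_prod Some Some ` K \<union> {(None, None)}"

end

theory Submission
  imports Defs
begin

lemma gen_lift:
  assumes n: "PT None = {None}"
    and s: "\<And>a. PT (Some a) = insert None (Some ` PS a)"
    and r: "\<And>a. a \<in> PS a"
  shows "{(x, y). PT x = PT y} = lift_rel {(a, b). PS a = PS b}"
proof (rule set_eqI)
  fix p :: "'a option \<times> 'a option"
  obtain x y where p: "p = (x, y)" by fastforce
  have inj: "\<And>a b. (insert None (Some ` PS a) = insert None (Some ` PS b)) = (PS a = PS b)"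
  proof
    fix a b assume h: "insert None (Some ` PS a) = insert None (Some ` PS b)"
    have "Some ` PS a = Some ` PS b"
    proof -
      have "Some ` PS a = insert None (Some ` PS a) - {None}" by auto
      also have "\<dots> = insert None (Some ` PS b) - {None}" using h by simp
      also have "\<dots> = Some ` PS b" by auto
      finally show ?thesis .
    qed
    thus "PS a = PS b" by (simp add: inj_image_eq_iff)
  qed simp
  have ne: "\<And>a. PT (Some a) \<noteq> PT None"
    using n s r by (metis image_eqI insertI2 option.distinct(1) singletonD)
  show "p \<in> {(x, y). PT x = PT y} \<longleftrightarrow> p \<in> lift_rel {(a, b). PS a = PS b}"
    unfolding p lift_rel_def
    using ne by (cases x; cases y) (auto simp: s inj)
qed

lemma tw_cases:
  "tw0_mult \<Phi> x y = None \<or> (\<exists>a b. x = Some a \<and> y = Some b \<and> tw0_mult \<Phi> x y = Some (a*b))"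
  by (cases x; cases y) auto

lemma lift_comp: "lift_rel A O lift_rel B = lift_rel (A O B)"
  unfolding lift_rel_def by auto

lemma lift_int: "lift_rel A \<inter> lift_rel B = lift_rel (A \<inter> B)"
  unfolding lift_rel_def by auto

theorem mainTheorem3:
  fixes \<Phi> :: "'a::semigroup_mult \<Rightarrow> 'a \<Rightarrow> nat"
  assumes "tight_twisting \<Phi>"
  shows "greenR (tw0_mult \<Phi>) = lift_rel (greenR (*))
       \<and> greenL (tw0_mult \<Phi>) = lift_rel (greenL (*))
       \<and> greenD (tw0_mult \<Phi>) = lift_rel (greenD (*))
       \<and> greenJ (tw0_mult \<Phi>) = lift_rel (greenJ (*))
       \<and> greenH (tw0_mult \<Phi>) = lift_rel (greenH (*))"
proof -
  have t1: "\<And>a b. \<exists>a'. a * b = a' * b \<and> \<Phi> a' b = 0"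
   and t2: "\<And>a b. \<exists>b'. a * b = a * b' \<and> \<Phi> a b' = 0"
    using assms unfolding tight_twisting_def by blast+
  have z1: "\<And>x. tw0_mult \<Phi> None x = None" by simp
  have z2: "\<And>x. tw0_mult \<Phi> x None = None" by (case_tac x) simp_all
  have R: "greenR (tw0_mult \<Phi>) = lift_rel (greenR (*))"
    unfolding greenR_def
  proof (rule gen_lift)
    show "princ_right (tw0_mult \<Phi>) None = {None}"
      unfolding princ_right_def by auto
    show "a \<in> princ_right (*) a" for a :: 'a unfolding princ_right_def by simp
    fix a :: 'a
    show "princ_right (tw0_mult \<Phi>) (Some a) = insert None (Some ` princ_right (*) a)"
      unfolding princ_right_def
    proof (intro equalityI subsetI)
      fix z assume zin: "z \<in> insert (Some a) (range (tw0_mult \<Phi> (Some a)))"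
      then show "z \<in> insert None (Some ` insert a (range ((*) a)))"
        proof (cases "z = Some a")
        case False
        then obtain x where zx: "z = tw0_mult \<Phi> (Some a) x" using zin False by blast
        show ?thesis using tw_cases[of \<Phi> "Some a" x] zx by auto
      qed simp
    next
      fix z assume "z \<in> insert None (Some ` insert a (range ((*) a)))"
      then consider "z = None" | "z = Some a" | b where "z = Some (a * b)" by auto
      then show "z \<in> insert (Some a) (range (tw0_mult \<Phi> (Some a)))"
      proof cases
        case 1 then show ?thesis using z2 by (metis insertI2 rangeI)
      next
        case 2 then show ?thesis by simp
      next
        case 3
        obtain b' where "a * b = a * b'" "\<Phi> a b' = 0" using t2 by blast
        then have "z = tw0_mult \<Phi> (Some a) (Some b')" using 3 by simp
        then show ?thesis by blast
      qed
    qed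
  qed
  have L: "greenL (tw0_mult \<Phi>) = lift_rel (greenL (*))"
    unfolding greenL_def
  proof (rule gen_lift)
    show "princ_left (tw0_mult \<Phi>) None = {None}"
      unfolding princ_left_def using z2 by auto
    show "a \<in> princ_left (*) a" for a :: 'a unfolding princ_left_def by simp
    fix a :: 'a
    show "princ_left (tw0_mult \<Phi>) (Some a) = insert None (Some ` princ_left (*) a)"
      unfolding princ_left_def
    proof (intro equalityI subsetI)
      fix z assume zin: "z \<in> insert (Some a) (range (\<lambda>x. tw0_mult \<Phi> x (Some a)))"
      then show "z \<in> insert None (Some ` insert a (range (\<lambda>x. x * a)))"
        proof (cases "z = Some a")
        case False
        then obtain x where zx: "z = tw0_mult \<Phi> x (Some a)" using zin False by blast
        show ?thesis using tw_cases[of \<Phi> x "Some a"] zx by auto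
      qed simp
    next
      fix z assume "z \<in> insert None (Some ` insert a (range (\<lambda>x. x * a)))"
      then consider "z = None" | "z = Some a" | b where "z = Some (b * a)" by auto
      then show "z \<in> insert (Some a) (range (\<lambda>x. tw0_mult \<Phi> x (Some a)))"
      proof cases
        case 1 then show ?thesis using z1 by (metis insertI2 rangeI)
      next
        case 2 then show ?thesis by simp
      next
        case 3
        obtain b' where "b * a = b' * a" "\<Phi> b' a = 0" using t1 by blast
        then have "z = tw0_mult \<Phi> (Some b') (Some a)" using 3 by simp
        then show ?thesis by blast
      qed
    qed
  qed
  have J: "greenJ (tw0_mult \<Phi>) = lift_rel (greenJ (*))"
    unfolding greenJ_def
  proof (rule gen_lift)
    show "princ_two (tw0_mult \<Phi>) None = {None}"
      unfolding princ_two_def using z2 by auto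
    show "a \<in> princ_two (*) a" for a :: 'a unfolding princ_two_def by simp
    fix a :: 'a
    show "princ_two (tw0_mult \<Phi>) (Some a) = insert None (Some ` princ_two (*) a)"
      unfolding princ_two_def
    proof (intro equalityI subsetI)
      fix z assume zin: "z \<in> insert (Some a) (range (tw0_mult \<Phi> (Some a)) \<union> range (\<lambda>x. tw0_mult \<Phi> x (Some a)) \<union>
             {tw0_mult \<Phi> (tw0_mult \<Phi> x (Some a)) y |x y. True})"
      then show "z \<in> insert None (Some ` insert a (range ((*) a) \<union> range (\<lambda>x. x * a) \<union> {x * a * y |x y. True}))"
        proof -
        from zin consider "z = Some a" | x where "z = tw0_mult \<Phi> (Some a) x"
          | x where "z = tw0_mult \<Phi> x (Some a)"
          | x y where "z = tw0_mult \<Phi> (tw0_mult \<Phi> x (Some a)) y" by blast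
        then show ?thesis
        proof cases
          case (2 x) then show ?thesis using tw_cases[of \<Phi> "Some a" x] by auto
        next
          case (3 x) then show ?thesis using tw_cases[of \<Phi> x "Some a"] by auto
        next
          case (4 x y)
          show ?thesis
          proof (cases "tw0_mult \<Phi> x (Some a) = None")
            case True then show ?thesis using 4 by simp
          next
            case False
            then obtain b where b: "x = Some b" "tw0_mult \<Phi> x (Some a) = Some (b*a)"
              using tw_cases[of \<Phi> x "Some a"] by auto
            have "z = None \<or> (\<exists>c. y = Some c \<and> z = Some (b*a*c))"
              using tw_cases[of \<Phi> "Some (b*a)" y] 4 b by auto
            then show ?thesis by blast
          qed
        qed simp
      qed
    next
      fix z assume "z \<in> insert None (Some ` insert a (range ((*) a) \<union> range (\<lambda>x. x * a) \<union> {x * a * y |x y. True}))"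
      then consider "z = None" | "z = Some a" | b where "z = Some (a * b)"
        | b where "z = Some (b * a)" | x y where "z = Some (x * a * y)" by auto
      then show "z \<in> insert (Some a) (range (tw0_mult \<Phi> (Some a)) \<union> range (\<lambda>x. tw0_mult \<Phi> x (Some a)) \<union>
             {tw0_mult \<Phi> (tw0_mult \<Phi> x (Some a)) y |x y. True})"
      proof cases
        case 1 then show ?thesis using z2 by (metis UnI1 insertI2 rangeI)
      next
        case 2 then show ?thesis by simp
      next
        case 3
        obtain b' where "a * b = a * b'" "\<Phi> a b' = 0" using t2 by blast
        then have "z = tw0_mult \<Phi> (Some a) (Some b')" using 3 by simp
        then show ?thesis by blast
      next
        case 4
        obtain b' where "b * a = b' * a" "\<Phi> b' a = 0" using t1 by blast
        then have "z = tw0_mult \<Phi> (Some b') (Some a)" using 4 by simp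
        then show ?thesis by blast
      next
        case 5
        obtain x' where x': "x * a = x' * a" "\<Phi> x' a = 0" using t1 by blast
        obtain y' where y': "x' * a * y = x' * a * y'" "\<Phi> (x' * a) y' = 0" using t2 by blast
        have "z = tw0_mult \<Phi> (tw0_mult \<Phi> (Some x') (Some a)) (Some y')"
          using 5 x' y' by simp
        then show ?thesis by blast
      qed
    qed
  qed
  have D: "greenD (tw0_mult \<Phi>) = lift_rel (greenD (*))"
    unfolding greenD_def R L lift_comp ..
  have H: "greenH (tw0_mult \<Phi>) = lift_rel (greenH (*))"
    unfolding greenH_def R L lift_int ..
  show ?thesis using R L D J H by blast
qed

end
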